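(* For every $m \in \mathbb{N}$ and every $c \geq 0$, the eigenvalues of the $2m\times 2m$ matrix $\tilde{H}_c(m) = \begin{bmatrix} \tilde{A} + 2cI & \tilde{B} \\ \tilde{B}^* & \hat{A} - 2cI \end{bmatrix}$ come in plus/minus pairs (including multiplicity) and $(-2|c - 1|,2|c - 1|) \cap \sigma(\tilde{H}_c(m)) =\emptyset$. Moreover $(-2|c - 1|,2|c - 1|)$ is the largest interval around zero with this property, i.e. it is the stable spectral gap of $\tilde{H}_c$: in particular it contains no spurious eigenvalues whatsoever.
   Context: Here $\tilde A,\tilde B,\hat A$ are real $m\times m$ tridiagonal matrices: $\tilde A$ has all super- and subdiagonal entries $1$ and diagonal $(1,0,\dots,0,-1)$; $\tilde B$ has superdiagonal entries $1$, subdiagonal entries $-1$ and diagonal $(1,0,\dots,0,1)$; $\hat A$ has all super- and subdiagonal entries $-1$ and diagonal $(1,0,\dots,0,-1)$. Equivalently, $\tilde H_c = U\tilde K_c U$ with $U=\frac{1}{\sqrt2}\begin{bmatrix} I & I\\ I & -I\end{bmatrix}$ and $\tilde K_c = 2\begin{bmatrix} e_me_m^T & T_c\\ T_c^* & -e_1e_1^T\end{bmatrix}$, where $T_c$ is the $m\times m$ lower bidiagonal matrix with diagonal entries $c$ and subdiagonal entries $1$, and $e_1,\dots,e_m$ is the canonical basis. $\tilde H_c$ is a low-rank boundary modification of $H_c(2m)=\begin{bmatrix} A+2cI & B\\ -B & -A-2cI\end{bmatrix}$, where $A$ is tridiagonal with zero diagonal and ones off the diagonal and $B$ is tridiagonal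 with zero diagonal, superdiagonal $1$ and subdiagonal $-1$. An interval around zero is called a stable spectral gap if it is disjoint from $\sigma(\tilde H_c(m))$ for all $m$ and is the largest such interval. *)

theory Defs
  imports "Jordan_Normal_Form.Char_Poly"
begin

text \<open>The m x m tridiagonal blocks. Diagonal corrections at the first and last
index are added (so for m = 1 both corrections apply to the single entry).\<close>

definition At :: "nat \<Rightarrow> real mat" where
  "At m = mat m m (\<lambda>(i,j).
     (if j = i + 1 \<or> i = j + 1 then 1 else 0)
   + (if i = j \<and> i = 0 then 1 else 0)
   + (if i = j \<and> i = m - 1 then -1 else 0))"

definition Bt :: "nat \<Rightarrow> real mat" where
  "Bt m = mat m m (\<lambda>(i,j).
     (if j = i + 1 then 1 else 0)
   + (if i = j + 1 then -1 else 0)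
   + (if i = j \<and> i = 0 then 1 else 0)
   + (if i = j \<and> i = m - 1 then 1 else 0))"

definition Ah :: "nat \<Rightarrow> real mat" where
  "Ah m = mat m m (\<lambda>(i,j).
     (if j = i + 1 \<or> i = j + 1 then -1 else 0)
   + (if i = j \<and> i = 0 then 1 else 0)
   + (if i = j \<and> i = m - 1 then -1 else 0))"

text \<open>The 2m x 2m matrix H~_c(m) = [[A~ + 2cI, B~],[B~^*, A^ - 2cI]] (real, so B~^* = B~^T).\<close>

definition Ht :: "real \<Rightarrow> nat \<Rightarrow> real mat" where
  "Ht c m = four_block_mat
     (At m + (2 * c) \<cdot>\<^sub>m 1\<^sub>m m) (Bt m)
     (transpose_mat (Bt m)) (Ah m - (2 * c) \<cdot>\<^sub>m 1\<^sub>m m)"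

text \<open>Spectrum (real points; H~_c(m) is real symmetric).\<close>

definition spec :: "real mat \<Rightarrow> real set" where
  "spec H = {x. eigenvalue H x}"

end

theory Submission
  imports Defs
begin


definition XE :: "nat \<Rightarrow> real vec \<Rightarrow> int \<Rightarrow> real" where
  "XE m v k = (if k < 0 then v$0 else if k \<ge> int m then - (v$(m-1)) else v$(nat k))"
definition YE :: "nat \<Rightarrow> real vec \<Rightarrow> int \<Rightarrow> real" where
  "YE m v k = (if k < 0 then - (v$m) else if k \<ge> int m then v$(m + (m-1)) else v$(m + nat k))"

lemma sum_split_add: "(\<Sum>j<m+n. f j) = (\<Sum>j<m. f j) + (\<Sum>j<n. f (m+j))" for m n :: nat and f :: "nat \<Rightarrow> real"
  by (induction n) (auto simp: add.assoc)

lemma S1: "(\<Sum>j<m. (if j = i+1 then f j else 0)) = (if i+1<m then f(i+1) else (0::real))" for m i :: nat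
  by (subst sum.delta[OF finite_lessThan]) auto
lemma S2: "(\<Sum>j<m. (if i = j+1 then f j else 0)) = (if 0<i \<and> i - 1 < m then f(i-1) else (0::real))" for m i :: nat
proof (cases i)
  case 0 then show ?thesis by simp
next
  case (Suc k)
  have "(\<Sum>j<m. (if i = j+1 then f j else 0)) = (\<Sum>j<m. (if j = k then f j else 0))"
    by (rule sum.cong) (auto simp: Suc)
  also have "\<dots> = (if k < m then f k else 0)" by (subst sum.delta[OF finite_lessThan]) auto
  finally show ?thesis using Suc by simp
qed
lemma S3: "(\<Sum>j<m. (if i = j then f j else 0)) = (if i<m then f i else (0::real))" for m i :: nat
  by (subst sum.delta'[OF finite_lessThan]) auto

lemma S1': "(\<Sum>j<m. (if j = Suc i then f j else 0)) = (if Suc i<m then f(Suc i) else (0::real))" for m i :: nat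
  using S1[where m=m and i=i and f=f] by simp
lemma S2': "(\<Sum>j<m. (if i = Suc j then f j else 0)) = (if 0<i \<and> i - 1 < m then f(i-1) else (0::real))" for m i :: nat
  using S2[where m=m and i=i and f=f] by simp

lemma At_e: "i<m \<Longrightarrow> j<m \<Longrightarrow> At m $$ (i,j) * x = (if j = i+1 then x else 0) + (if i = j+1 then x else 0)
   + (if i = j then (if i=0 then x else 0) - (if i = m-1 then x else 0) else 0)"
  by (auto simp: At_def)
lemma Ah_e: "i<m \<Longrightarrow> j<m \<Longrightarrow> Ah m $$ (i,j) * x = - (if j = i+1 then x else 0) - (if i = j+1 then x else 0)
   + (if i = j then (if i=0 then x else 0) - (if i = m-1 then x else 0) else 0)"
  by (auto simp: Ah_def)
lemma Bt_e: "i<m \<Longrightarrow> j<m \<Longrightarrow> Bt m $$ (i,j) * x = (if j = i+1 then x else 0) - (if i = j+1 then x else 0)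
   + (if i = j then (if i=0 then x else 0) + (if i = m-1 then x else 0) else 0)"
  by (auto simp: Bt_def)
lemma BtT_e: "i<m \<Longrightarrow> j<m \<Longrightarrow> Bt m $$ (j,i) * x = (if i = j+1 then x else 0) - (if j = i+1 then x else 0)
   + (if i = j then (if i=0 then x else 0) + (if i = m-1 then x else 0) else 0)"
  by (auto simp: Bt_def)

lemma Ht_carrier: "Ht c m \<in> carrier_mat (2*m) (2*m)"
  by (auto simp: Ht_def At_def Bt_def Ah_def)

lemma dims[simp]: "At m \<in> carrier_mat m m" "Bt m \<in> carrier_mat m m" "Ah m \<in> carrier_mat m m"
  "dim_row (At m) = m" "dim_col (At m) = m" "dim_row (Bt m) = m" "dim_col (Bt m) = m"
  "dim_row (Ah m) = m" "dim_col (Ah m) = m"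
  by (auto simp: At_def Bt_def Ah_def)

lemma Ht_tl: "i<m \<Longrightarrow> j<m \<Longrightarrow> Ht c m $$ (i,j) = At m $$ (i,j) + (if i = j then 2*c else 0)"
  unfolding Ht_def by (subst index_mat_four_block) auto
lemma Ht_tr: "i<m \<Longrightarrow> j<m \<Longrightarrow> Ht c m $$ (i,m+j) = Bt m $$ (i,j)"
  unfolding Ht_def by (subst index_mat_four_block) auto
lemma Ht_bl: "i<m \<Longrightarrow> j<m \<Longrightarrow> Ht c m $$ (m+i,j) = Bt m $$ (j,i)"
  unfolding Ht_def by (subst index_mat_four_block) auto
lemma Ht_br: "i<m \<Longrightarrow> j<m \<Longrightarrow> Ht c m $$ (m+i,m+j) = Ah m $$ (i,j) - (if i = j then 2*c else 0)"
  unfolding Ht_def by (subst index_mat_four_block) auto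

lemmas Ht_tr' = Ht_tr[unfolded add.commute[of m]]
lemmas Ht_bl' = Ht_bl[unfolded add.commute[of m]]
lemmas Ht_br' = Ht_br[unfolded add.commute[of m]]

lemma Hv_top:
  assumes v: "v \<in> carrier_vec (2*m)" and i: "i < m"
  shows "(Ht c m *\<^sub>v v) $ i = XE m v (int i - 1) + XE m v (int i + 1) + 2*c*(v$i)
          + YE m v (int i + 1) - YE m v (int i - 1)"
proof -
  have d: "dim_row (Ht c m) = 2*m" "dim_col (Ht c m) = 2*m" using Ht_carrier by auto
  have "(Ht c m *\<^sub>v v) $ i = row (Ht c m) i \<bullet> v"
    using i d by (intro index_mult_mat_vec) simp
  also have "\<dots> = (\<Sum>j<m+m. Ht c m $$ (i,j) * v$j)"
    unfolding scalar_prod_def using v d i by (auto simp: mult_2 lessThan_atLeast0 intro!: sum.cong)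
  also have "\<dots> = (\<Sum>j<m. Ht c m $$ (i,j) * v$j) + (\<Sum>j<m. Ht c m $$ (i,m+j) * v$(m+j))"
    by (rule sum_split_add)
  also have "(\<Sum>j<m. Ht c m $$ (i,j) * v$j) = (\<Sum>j<m. At m $$ (i,j) * v$j + (if i = j then 2*c*v$j else 0))"
    using i by (intro sum.cong) (auto simp: Ht_tl Ht_tr algebra_simps)
  also have "\<dots> = (if i+1<m then v$(i+1) else 0) + (if 0<i then v$(i-1) else 0)
     + (if i=0 then v$i else 0) - (if i = m-1 then v$i else 0) + 2*c*v$i"
    using i by (simp add: At_e sum.distrib S1 S2 S3 S1' S2' sum_subtractf)
  also have "(\<Sum>j<m. Ht c m $$ (i,m+j) * v$(m+j)) = (\<Sum>j<m. Bt m $$ (i,j) * v$(m+j))"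
    using i by (intro sum.cong) (auto simp: Ht_tr)
  also have "\<dots> = (if i+1<m then v$(m+(i+1)) else 0) - (if 0<i then v$(m+(i-1)) else 0)
     + (if i=0 then v$(m+i) else 0) + (if i = m-1 then v$(m+i) else 0)"
    using i by (simp add: Bt_e sum.distrib S1 S2 S3 S1' S2' sum_subtractf)
  finally show ?thesis using i
    by (auto simp: XE_def YE_def nat_diff_distrib' nat_add_distrib)
qed
lemma Hv_bot:
  assumes v: "v \<in> carrier_vec (2*m)" and i: "i < m"
  shows "(Ht c m *\<^sub>v v) $ (m+i) = XE m v (int i - 1) - XE m v (int i + 1) - 2*c*(v$(m+i))
          - YE m v (int i + 1) - YE m v (int i - 1)"
proof -
  have d: "dim_row (Ht c m) = 2*m" "dim_col (Ht c m) = 2*m" using Ht_carrier by auto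
  have "(Ht c m *\<^sub>v v) $ (m+i) = row (Ht c m) (m+i) \<bullet> v"
    using i d by (intro index_mult_mat_vec) simp
  also have "\<dots> = (\<Sum>j<m+m. Ht c m $$ (m+i,j) * v$j)"
    unfolding scalar_prod_def using v d i by (auto simp: mult_2 lessThan_atLeast0 intro!: sum.cong)
  also have "\<dots> = (\<Sum>j<m. Ht c m $$ (m+i,j) * v$j) + (\<Sum>j<m. Ht c m $$ (m+i,m+j) * v$(m+j))"
    by (rule sum_split_add)
  also have "(\<Sum>j<m. Ht c m $$ (m+i,j) * v$j) = (\<Sum>j<m. Bt m $$ (j,i) * v$j)"
    using i by (intro sum.cong) (auto simp: Ht_bl)
  also have "\<dots> = - (if i+1<m then v$(i+1) else 0) + (if 0<i then v$(i-1) else 0)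
     + (if i=0 then v$i else 0) + (if i = m-1 then v$i else 0)"
    using i by (simp add: BtT_e sum.distrib S1 S2 S3 S1' S2' sum_subtractf)
  also have "(\<Sum>j<m. Ht c m $$ (m+i,m+j) * v$(m+j)) = (\<Sum>j<m. Ah m $$ (i,j) * v$(m+j) - (if i = j then 2*c*v$(m+j) else 0))"
    using i by (intro sum.cong) (auto simp: Ht_br left_diff_distrib)
  also have "\<dots> = - (if i+1<m then v$(m+(i+1)) else 0) - (if 0<i then v$(m+(i-1)) else 0)
     + (if i=0 then v$(m+i) else 0) - (if i = m-1 then v$(m+i) else 0) - 2*c*v$(m+i)"
    using i by (simp add: Ah_e sum.distrib S1 S2 S3 S1' S2' sum_subtractf sum_negf)
  finally show ?thesis using i
    by (auto simp: XE_def YE_def nat_diff_distrib' nat_add_distrib)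
qed


lemma ptwise: "(c::real) \<ge> 0 \<Longrightarrow> (c*u + w)^2 \<ge> (c^2 - c)*u^2 + (1-c)*w^2"
proof -
  assume "c \<ge> 0"
  then have "c*(u+w)^2 \<ge> 0" by simp
  then show ?thesis by (simp add: power2_eq_square algebra_simps)
qed

lemma reindex_boundary:
  fixes P Q :: "int \<Rightarrow> real"
  assumes "Q (-1) = P 0" "P (int m) = - Q (int m - 1)" "m \<ge> 1"
  shows "(\<Sum>i<m. Q (int i - 1)^2 + P (int i + 1)^2) = (\<Sum>i<m. P (int i)^2 + Q (int i)^2)"
proof -
  obtain n where m: "m = Suc n" using assms(3) by (cases m) auto
  have a: "(\<Sum>i<m. Q (int i - 1)^2) = P 0 ^2 + (\<Sum>i<n. Q (int i)^2)"
    unfolding m sum.lessThan_Suc_shift using assms(1) by simp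
  have b: "(\<Sum>i<m. P (int i + 1)^2) = (\<Sum>i<n. P (int (Suc i))^2) + Q (int n)^2"
    unfolding m sum.lessThan_Suc using assms(2) m by (simp add: add.commute)
  have c: "(\<Sum>i<m. P (int i)^2) = P 0 ^2 + (\<Sum>i<n. P (int (Suc i))^2)"
    unfolding m sum.lessThan_Suc_shift by simp
  have d: "(\<Sum>i<m. Q (int i)^2) = (\<Sum>i<n. Q (int i)^2) + Q (int n)^2"
    unfolding m sum.lessThan_Suc by simp
  show ?thesis using a b c d by (simp add: sum.distrib)
qed

lemma gap:
  assumes c: "c \<ge> 0" and m: "m \<ge> 1" and ev: "eigenvalue (Ht c m) lam"
  shows "2 * \<bar>c - 1\<bar> \<le> \<bar>lam\<bar>"
proof -
  have dr: "dim_row (Ht c m) = 2*m" using Ht_carrier by auto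
  obtain v where v: "v \<in> carrier_vec (2*m)" "v \<noteq> 0\<^sub>v (2*m)" "Ht c m *\<^sub>v v = lam \<cdot>\<^sub>v v"
    using ev unfolding eigenvalue_def eigenvector_def dr by auto
  define P where "P k = XE m v k + YE m v k" for k
  define Q where "Q k = XE m v k - YE m v k" for k
  have XEi: "XE m v (int i) = v$i" if "i<m" for i using that by (simp add: XE_def)
  have YEi: "YE m v (int i) = v$(m+i)" if "i<m" for i using that by (simp add: YE_def)
  have eT: "lam * v$i = XE m v (int i - 1) + XE m v (int i + 1) + 2*c*(v$i)
          + YE m v (int i + 1) - YE m v (int i - 1)" if "i<m" for i
    using Hv_top[OF v(1) that, of c] v(3) that carrier_vecD[OF v(1)] by simp
  have eB: "lam * v$(m+i) = XE m v (int i - 1) - XE m v (int i + 1) - 2*c*(v$(m+i))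
          - YE m v (int i + 1) - YE m v (int i - 1)" if "i<m" for i
    using Hv_bot[OF v(1) that, of c] v(3) that carrier_vecD[OF v(1)] by simp
  have e1: "(lam/2) * P (int i) = c * Q (int i) + Q (int i - 1)" if "i<m" for i
    using eT[OF that] eB[OF that] XEi[OF that] YEi[OF that] unfolding P_def Q_def by (simp add: algebra_simps)
  have e2: "(lam/2) * Q (int i) = c * P (int i) + P (int i + 1)" if "i<m" for i
    using eT[OF that] eB[OF that] XEi[OF that] YEi[OF that] unfolding P_def Q_def by (simp add: algebra_simps)
  have b1: "Q (-1) = P 0" unfolding P_def Q_def XE_def YE_def using m by simp
  have b2: "P (int m) = - Q (int m - 1)" unfolding P_def Q_def XE_def YE_def using m
    by (simp add: nat_diff_distrib')
  define S where "S = (\<Sum>i<m. P (int i)^2 + Q (int i)^2)"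
  have "(lam/2)^2 * S = (\<Sum>i<m. ((lam/2) * P (int i))^2 + ((lam/2) * Q (int i))^2)"
    unfolding S_def sum_distrib_left by (intro sum.cong refl) (simp add: power2_eq_square algebra_simps)
  also have "\<dots> = (\<Sum>i<m. (c * Q (int i) + Q (int i - 1))^2 + (c * P (int i) + P (int i + 1))^2)"
    using e1 e2 by (intro sum.cong refl) (metis lessThan_iff)
  also have "\<dots> \<ge> (\<Sum>i<m. ((c^2 - c)*(Q (int i))^2 + (1-c)*(Q (int i - 1))^2)
       + ((c^2 - c)*(P (int i))^2 + (1-c)*(P (int i + 1))^2))"
    by (intro sum_mono add_mono ptwise c)
  also have "(\<Sum>i<m. ((c^2 - c)*(Q (int i))^2 + (1-c)*(Q (int i - 1))^2)
       + ((c^2 - c)*(P (int i))^2 + (1-c)*(P (int i + 1))^2))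
     = (\<Sum>i<m. (c^2-c)*(P (int i)^2 + Q (int i)^2) + (1-c)*(Q (int i - 1)^2 + P (int i + 1)^2))"
    by (intro sum.cong refl) (simp add: algebra_simps)
  also have "\<dots> = (c^2 - c) * S + (1-c) * (\<Sum>i<m. Q (int i - 1)^2 + P (int i + 1)^2)"
    unfolding S_def by (simp only: sum_distrib_left sum.distrib[symmetric])
  also have "(\<Sum>i<m. Q (int i - 1)^2 + P (int i + 1)^2) = S"
    unfolding S_def by (rule reindex_boundary[OF b1 b2 m])
  finally have ineq: "(c-1)^2 * S \<le> (lam/2)^2 * S" by (simp add: power2_eq_square algebra_simps)
  have "S > 0"
  proof -
    obtain j where j: "j < 2*m" "v$j \<noteq> 0"
      using v(1,2) by (metis carrier_vecD eq_vecI index_zero_vec(1) index_zero_vec(2))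
    have "\<exists>i<m. P (int i) \<noteq> 0 \<or> Q (int i) \<noteq> 0"
    proof (cases "j < m")
      case True
      then show ?thesis using j XEi[OF True] unfolding P_def Q_def
        by (intro exI[of _ j]) (auto simp: algebra_simps)
    next
      case False
      then have jj: "j - m < m" "m + (j - m) = j" using j by auto
      then show ?thesis using j YEi[OF jj(1)] unfolding P_def Q_def
        by (intro exI[of _ "j-m"]) (auto simp: algebra_simps)
    qed
    then obtain i where i: "i<m" "P (int i) \<noteq> 0 \<or> Q (int i) \<noteq> 0" by blast
    have "0 < P (int i)^2 + Q (int i)^2" using i(2) by (auto simp: add_pos_nonneg add_nonneg_pos)
    moreover have "0 \<le> P (int k)^2 + Q (int k)^2" for k by simp
    ultimately show ?thesis unfolding S_def using i(1)
      by (intro sum_pos2[of _ i]) auto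
  qed
  then have "(c-1)^2 \<le> (lam/2)^2" using ineq by simp
  then have "\<bar>c-1\<bar> \<le> \<bar>lam/2\<bar>" using abs_le_square_iff by blast
  then show ?thesis by simp
qed


lemma eig_vec:
  fixes th lam c :: real
  assumes m: "m \<ge> 1" and cm: "cos (real m * th) = 0" and sn: "sin th \<noteq> 0"
    and ch: "cos (th/2) \<noteq> 0"
    and lam: "lam^2 = (2*(cos th + c))^2 + (2*sin th)^2"
  shows "eigenvalue (Ht c m) lam"
proof -
  define X where "X k = cos ((real_of_int k + 1/2) * th)" for k :: int
  define S where "S k = sin ((real_of_int k + 1/2) * th)" for k :: int
  define al where "al = 2*(cos th + c)"
  define be where "be = 2 * sin th"
  define t where "t = (lam - al) / be"
  have be0: "be \<noteq> 0" using sn by (simp add: be_def)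
  have h1: "al + t * be = lam" using be0 by (simp add: t_def field_simps)
  have h2: "be - t * al = lam * t"
  proof -
    have "lam^2 - al^2 = be^2" using lam by (simp add: al_def be_def)
    then have "(lam - al) * (lam + al) = be * be" by (simp add: power2_eq_square algebra_simps)
    then show ?thesis using be0 by (simp add: t_def field_simps)
  qed
  define v where "v = vec (2*m) (\<lambda>j. if j < m then X (int j) else t * S (int j - int m))"
  have vc: "v \<in> carrier_vec (2*m)" by (simp add: v_def)
  have yX: "X (k-1) = cos ((real_of_int k + 1/2) * th - th)" "X (k+1) = cos ((real_of_int k + 1/2) * th + th)" for k
    unfolding X_def by (simp_all add: algebra_simps)
  have yS: "S (k-1) = sin ((real_of_int k + 1/2) * th - th)" "S (k+1) = sin ((real_of_int k + 1/2) * th + th)" for k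
    unfolding S_def by (simp_all add: algebra_simps)
  have nh: "(real_of_int (-1) + 1/2) * th = - ((real_of_int 0 + 1/2)*th)" by simp
  have Xm1: "X (-1) = X 0" unfolding X_def nh cos_minus ..
  have Sm1: "S (-1) = - S 0" unfolding S_def nh sin_minus ..
  have Xmm: "X (int m) = - X (int m - 1)" and Smm: "S (int m) = S (int m - 1)"
  proof -
    have a1: "(real_of_int (int m) + 1/2) * th = real m * th + th/2" by (simp add: algebra_simps)
    have a2: "(real_of_int (int m - 1) + 1/2) * th = real m * th - th/2" by (simp add: algebra_simps)
    show "X (int m) = - X (int m - 1)" unfolding X_def a1 a2 cos_add cos_diff cm by simp
    show "S (int m) = S (int m - 1)" unfolding S_def a1 a2 sin_add sin_diff cm by simp
  qed
  have XE: "XE m v k = X k" if hk: "-1 \<le> k" "k \<le> int m" for k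
  proof -
    consider "k = -1" | "k = int m" | "0 \<le> k" "k < int m" using hk by linarith
    then show ?thesis
    proof cases
      case 1 then show ?thesis using m Xm1 by (simp add: XE_def v_def)
    next
      case 2 then show ?thesis using m Xmm by (simp add: XE_def v_def of_nat_diff)
    next
      case 3 then show ?thesis by (simp add: XE_def v_def nat_less_iff)
    qed
  qed
  have YE: "YE m v k = t * S k" if hk: "-1 \<le> k" "k \<le> int m" for k
  proof -
    consider "k = -1" | "k = int m" | "0 \<le> k" "k < int m" using hk by linarith
    then show ?thesis
    proof cases
      case 1 then show ?thesis using m Sm1 by (simp add: YE_def v_def)
    next
      case 2 then show ?thesis using m Smm by (auto simp: YE_def v_def of_nat_diff)
    next
      case 3 then show ?thesis by (simp add: YE_def v_def nat_less_iff)
    qed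
  qed
  have vt: "v $ i = X (int i)" if "i < m" for i using that by (simp add: v_def)
  have vb: "v $ (m+i) = t * S (int i)" if "i < m" for i using that by (simp add: v_def)
  have "Ht c m *\<^sub>v v = lam \<cdot>\<^sub>v v"
  proof (rule eq_vecI)
    show "dim_vec (Ht c m *\<^sub>v v) = dim_vec (lam \<cdot>\<^sub>v v)" using Ht_carrier[of c m] vc by simp
    fix j assume "j < dim_vec (lam \<cdot>\<^sub>v v)"
    then have j: "j < 2*m" using vc by simp
    show "(Ht c m *\<^sub>v v) $ j = (lam \<cdot>\<^sub>v v) $ j"
    proof (cases "j < m")
      case True
      let ?y = "(real_of_int (int j) + 1/2) * th"
      have "(Ht c m *\<^sub>v v) $ j = X (int j - 1) + X (int j + 1) + 2*c*X (int j) + t * S (int j + 1) - t * S (int j - 1)"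
        using Hv_top[OF vc True, of c] True XE YE vt by simp
      also have "\<dots> = cos (?y - th) + cos (?y + th) + 2*c*cos ?y + t * (sin (?y + th) - sin (?y - th))"
        unfolding yX yS by (simp add: X_def algebra_simps)
      also have "\<dots> = (al + t * be) * cos ?y"
        unfolding cos_add cos_diff sin_add sin_diff al_def be_def by (simp add: algebra_simps)
      also have "\<dots> = lam * v $ j" using h1 vt[OF True] by (simp add: X_def)
      finally show ?thesis using j vc by simp
    next
      case False
      define i where "i = j - m"
      have i: "i < m" "j = m + i" using j False by (auto simp: i_def)
      let ?y = "(real_of_int (int i) + 1/2) * th"
      have "(Ht c m *\<^sub>v v) $ j = X (int i - 1) - X (int i + 1) - 2*c*(t * S (int i)) - t * S (int i + 1) - t * S (int i - 1)"
        using Hv_bot[OF vc i(1), of c] i XE YE vb by simp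
      also have "\<dots> = cos (?y - th) - cos (?y + th) - 2*c*t*sin ?y - t * (sin (?y + th) + sin (?y - th))"
        unfolding yX yS by (simp add: S_def algebra_simps)
      also have "\<dots> = (be - t * al) * sin ?y"
        unfolding cos_add cos_diff sin_add sin_diff al_def be_def by (simp add: algebra_simps)
      also have "\<dots> = lam * v $ j" using h2 vb[OF i(1)] i by (simp add: S_def)
      finally show ?thesis using j vc by simp
    qed
  qed
  moreover have "v \<noteq> 0\<^sub>v (2*m)"
  proof
    assume "v = 0\<^sub>v (2*m)"
    then have "v $ 0 = 0" using m by simp
    moreover have "v $ 0 = cos (th/2)" using m by (simp add: v_def X_def)
    ultimately show False using ch by simp
  qed
  ultimately show ?thesis using vc Ht_carrier unfolding eigenvalue_def eigenvector_def
    by (metis carrier_matD(1))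
qed


lemma Bt_rev: assumes "a + i = k" "b + j = k" "i < Suc k" "j < Suc k"
  shows "Bt (Suc k) $$ (b,a) = Bt (Suc k) $$ (i,j)"
proof -
  have ab: "a < Suc k" "b < Suc k" using assms by auto
  have e1: "(a = b+1) = (j = i+1)" "(b = a+1) = (i = j+1)" "(b = a \<and> b = 0) = (i = j \<and> i = Suc k - 1)"
    "(b = a \<and> b = Suc k - 1) = (i = j \<and> i = 0)" using assms(1,2) by arith+
  show ?thesis unfolding Bt_def index_mat(1)[OF ab(2) ab(1)] index_mat(1)[OF assms(3,4)] prod.case e1
    by (simp only: ac_simps)
qed
lemma Ah_rev: assumes "a + i = k" "b + j = k" "i < Suc k" "j < Suc k"
  shows "Ah (Suc k) $$ (a,b) = - At (Suc k) $$ (i,j)"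
proof -
  have ab: "a < Suc k" "b < Suc k" using assms by auto
  have e1: "(b = a+1 \<or> a = b+1) = (j = i+1 \<or> i = j+1)" "(a = b \<and> a = 0) = (i = j \<and> i = Suc k-1)"
    "(a = b \<and> a = Suc k-1) = (i = j \<and> i = 0)" using assms(1,2) by arith+
  show ?thesis unfolding Ah_def At_def index_mat(1)[OF ab] index_mat(1)[OF assms(3,4)] prod.case e1
    by simp
qed
lemma At_rev: assumes "a + i = k" "b + j = k" "i < Suc k" "j < Suc k"
  shows "At (Suc k) $$ (a,b) = - Ah (Suc k) $$ (i,j)"
proof -
  have ab: "a < Suc k" "b < Suc k" using assms by auto
  have e1: "(b = a+1 \<or> a = b+1) = (j = i+1 \<or> i = j+1)" "(a = b \<and> a = 0) = (i = j \<and> i = Suc k-1)"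
    "(a = b \<and> a = Suc k-1) = (i = j \<and> i = 0)" using assms(1,2) by arith+
  show ?thesis unfolding Ah_def At_def index_mat(1)[OF ab] index_mat(1)[OF assms(3,4)] prod.case e1
    by simp
qed



definition sg :: "nat \<Rightarrow> nat \<Rightarrow> real" where "sg m i = (if i < m then 1 else -1)"

lemma Hsym:
  assumes i: "i < 2*Suc k" and j: "j < 2*Suc k" and i2: "i2 + i = 2*Suc k - 1" and j2: "j2 + j = 2*Suc k - 1"
  shows "Ht c (Suc k) $$ (i2, j2) = - sg (Suc k) i * sg (Suc k) j * Ht c (Suc k) $$ (i,j)"
proof -
  let ?m = "Suc k"
  have i2': "i2 + i = k + Suc k" and j2': "j2 + j = k + Suc k" using i2 j2 by simp_all
  consider "i < ?m" "j < ?m" | "i < ?m" "\<not> j < ?m" | "\<not> i < ?m" "j < ?m" | "\<not> i < ?m" "\<not> j < ?m" by blast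
  then show ?thesis
  proof cases
    case 1
    define a where "a = k - i"
    define b where "b = k - j"
    have a0: "a + i = k" "b + j = k" using 1 unfolding a_def b_def by simp_all
    have ab: "a + i = k" "b + j = k" "a < ?m" "b < ?m" "i2 = ?m + a" "j2 = ?m + b" "(a = b) = (i = j)"
      using a0 i2' j2' by linarith+
    show ?thesis unfolding ab(5,6) Ht_br[OF ab(3,4)] Ht_tl[OF 1] Ah_rev[OF ab(1,2) 1] ab(7) using 1
      by (simp add: sg_def)
  next
    case 2
    define a where "a = k - i"
    define j' where "j' = j - ?m"
    define b where "b = k - j'"
    have a0: "a + i = k" "j = ?m + j'" using 2 unfolding a_def j'_def by simp_all
    have a1: "j' < ?m" using a0 j by simp
    have a2: "b + j' = k" using a1 unfolding b_def by simp
    have ab: "a + i = k" "b + j' = k" "a < ?m" "b < ?m" "i2 = ?m + a" "j2 = b" "j = ?m + j'" "j' < ?m"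
      using a0 a1 a2 i2' j2' by linarith+
    show ?thesis unfolding ab(5,6,7) Ht_bl[OF ab(3,4)] Ht_tr[OF 2(1) ab(8)] Bt_rev[OF ab(1,2) 2(1) ab(8)] using 2
      by (simp add: sg_def)
  next
    case 3
    define i' where "i' = i - ?m"
    define a where "a = k - i'"
    define b where "b = k - j"
    have a0: "b + j = k" "i = ?m + i'" using 3 unfolding b_def i'_def by simp_all
    have a1: "i' < ?m" using a0 i by simp
    have a2: "a + i' = k" using a1 unfolding a_def by simp
    have ab: "a + i' = k" "b + j = k" "a < ?m" "b < ?m" "i2 = a" "j2 = ?m + b" "i = ?m + i'" "i' < ?m"
      using a0 a1 a2 i2' j2' by linarith+
    show ?thesis unfolding ab(5,6,7) Ht_tr[OF ab(3,4)] Ht_bl[OF ab(8) 3(2)] Bt_rev[OF ab(2,1) 3(2) ab(8)] using 3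
      by (simp add: sg_def)
  next
    case 4
    define i' where "i' = i - ?m"
    define j' where "j' = j - ?m"
    define a where "a = k - i'"
    define b where "b = k - j'"
    have a0: "i = ?m + i'" "j = ?m + j'" using 4 unfolding i'_def j'_def by simp_all
    have a1: "i' < ?m" "j' < ?m" using a0 i j by simp_all
    have a2: "a + i' = k" "b + j' = k" using a1 unfolding a_def b_def by simp_all
    have ab: "a + i' = k" "b + j' = k" "a < ?m" "b < ?m" "i2 = a" "j2 = b" "i = ?m + i'" "j = ?m + j'" "i' < ?m" "j' < ?m"
      "(a = b) = (i' = j')"
      using a0 a1 a2 i2' j2' by linarith+
    show ?thesis unfolding ab(5,6,7,8) Ht_tl[OF ab(3,4)] Ht_br[OF ab(9,10)] At_rev[OF ab(1,2,9,10)] ab(11) using 4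
      by (simp add: sg_def)
  qed
qed




definition Pm :: "(nat \<Rightarrow> real) \<Rightarrow> nat \<Rightarrow> real mat" where
  "Pm s n = mat n n (\<lambda>(i,j). if i + j = n - 1 then s i else 0)"

lemma Pm_carrier[simp]: "Pm s n \<in> carrier_mat n n" by (simp add: Pm_def)
lemma Pm_dims[simp]: "dim_row (Pm s n) = n" "dim_col (Pm s n) = n" by (simp_all add: Pm_def)


lemma Pm_left:
  assumes M: "M \<in> carrier_mat n n" and i: "i < n" and j: "j < n"
  shows "(Pm s n * M) $$ (i,j) = s i * M $$ (n-1-i, j)"
proof -
  have "(Pm s n * M) $$ (i,j) = row (Pm s n) i \<bullet> col M j" using i j M by simp
  also have "\<dots> = (\<Sum>l<n. (if l = n-1-i then s i * M $$ (l,j) else 0))"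
    unfolding scalar_prod_def lessThan_atLeast0 by (rule sum.cong) (use M i j in \<open>auto simp: Pm_def\<close>)
  also have "\<dots> = s i * M $$ (n-1-i, j)" using i by (subst sum.delta[OF finite_lessThan]) auto
  finally show ?thesis .
qed

lemma Pm_right:
  assumes M: "M \<in> carrier_mat n n" and i: "i < n" and j: "j < n"
  shows "(M * Pm s n) $$ (i,j) = M $$ (i, n-1-j) * s (n-1-j)"
proof -
  have "(M * Pm s n) $$ (i,j) = row M i \<bullet> col (Pm s n) j" using i j M by simp
  also have "\<dots> = (\<Sum>l<n. (if l = n-1-j then M $$ (i,l) * s l else 0))"
    unfolding scalar_prod_def lessThan_atLeast0 by (rule sum.cong) (use M i j in \<open>auto simp: Pm_def\<close>)
  also have "\<dots> = M $$ (i, n-1-j) * s (n-1-j)" using j by (subst sum.delta[OF finite_lessThan]) auto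
  finally show ?thesis .
qed

lemma Ht_similar: "similar_mat (Ht c (Suc k)) (- Ht c (Suc k))"
proof -
  let ?m = "Suc k"
  let ?n = "2 * Suc k"
  let ?H = "Ht c ?m"
  let ?P = "Pm (\<lambda>i. - sg ?m i) ?n"
  let ?Q = "Pm (sg ?m) ?n"
  have H: "?H \<in> carrier_mat ?n ?n" by (rule Ht_carrier)
  have mH: "- ?H \<in> carrier_mat ?n ?n" using H by simp
  have sgs: "sg ?m (?n - 1 - i) = - sg ?m i" if "i < ?n" for i using that by (simp add: sg_def) linarith
  have sq: "sg ?m i * sg ?m i = 1" for i by (simp add: sg_def)
  have rr: "?n - 1 - (?n - 1 - i) = i" if "i < ?n" for i using that by simp
  have PQ: "?P * ?Q = 1\<^sub>m ?n"
  proof (rule eq_matI)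
    fix i j assume ij: "i < dim_row (1\<^sub>m ?n)" "j < dim_col (1\<^sub>m ?n)"
    then have i: "i < ?n" and j: "j < ?n" by auto
    have "(?P * ?Q) $$ (i,j) = - sg ?m i * ?Q $$ (?n-1-i, j)" using Pm_left[OF Pm_carrier i j] by simp
    also have "\<dots> = 1\<^sub>m ?n $$ (i,j)" using i j sgs[OF i] sq[of i]
      by (auto simp: Pm_def)
    finally show "(?P * ?Q) $$ (i,j) = 1\<^sub>m ?n $$ (i,j)" .
  qed auto
  have QP: "?Q * ?P = 1\<^sub>m ?n"
  proof (rule eq_matI)
    fix i j assume ij: "i < dim_row (1\<^sub>m ?n)" "j < dim_col (1\<^sub>m ?n)"
    then have i: "i < ?n" and j: "j < ?n" by auto
    have "(?Q * ?P) $$ (i,j) = sg ?m i * ?P $$ (?n-1-i, j)" using Pm_left[OF Pm_carrier i j] by simp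
    also have "\<dots> = 1\<^sub>m ?n $$ (i,j)" using i j sgs[OF i] sq[of i]
      by (auto simp: Pm_def)
    finally show "(?Q * ?P) $$ (i,j) = 1\<^sub>m ?n $$ (i,j)" .
  qed auto
  have HH: "?H = ?P * (- ?H) * ?Q"
  proof (rule eq_matI)
    fix i j assume ij: "i < dim_row (?P * (- ?H) * ?Q)" "j < dim_col (?P * (- ?H) * ?Q)"
    then have i: "i < ?n" and j: "j < ?n" by auto
    have j': "?n - 1 - j < ?n" by simp
    have i': "?n - 1 - i < ?n" by simp
    have "(?P * (- ?H) * ?Q) $$ (i,j) = (?P * (- ?H)) $$ (i, ?n-1-j) * sg ?m (?n-1-j)"
      using Pm_right[OF mult_carrier_mat[OF Pm_carrier mH] i j] by simp
    also have "(?P * (- ?H)) $$ (i, ?n-1-j) = - sg ?m i * (- ?H) $$ (?n-1-i, ?n-1-j)"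
      using Pm_left[OF mH i j'] by simp
    also have "(- ?H) $$ (?n-1-i, ?n-1-j) = - ?H $$ (?n-1-i, ?n-1-j)" using i' j' H by simp
    also have "?H $$ (?n-1-i, ?n-1-j) = - sg ?m i * sg ?m j * ?H $$ (i,j)"
      by (rule Hsym) (use i j in auto)
    finally show "?H $$ (i,j) = (?P * (- ?H) * ?Q) $$ (i,j)"
      using sgs[OF j] sq[of i] sq[of j] by (simp add: algebra_simps)
  qed (use H in auto)
  show ?thesis
    by (rule similar_matI[OF _ PQ QP HH]) (use H in auto)
qed




lemma pcompose_power: "pcompose (p ^ n) r = (pcompose p r) ^ n"
  by (induction n) (simp_all add: pcompose_mult pcompose_1)

lemma order_neg_le:
  fixes p :: "complex poly"
  assumes p: "p \<noteq> 0"
  shows "order (-a) p \<le> order a (pcompose p [:0,-1:])"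
proof -
  let ?k = "order (-a) p"
  have "[:-(-a), 1:] ^ ?k dvd p" by (rule order_1)
  then obtain s where s: "p = [:a, 1:] ^ ?k * s" by (auto elim: dvdE)
  have e: "pcompose [:a, 1:] [:0,-1:] = Polynomial.smult (-1) [:-a, 1:]"
    by (simp add: pcompose_pCons)
  have "pcompose p [:0,-1:] = Polynomial.smult ((-1)^?k) ([:-a, 1:] ^ ?k) * pcompose s [:0,-1:]"
  proof -
    have "pcompose p [:0,-1:] = (pcompose [:a, 1:] [:0,-1:]) ^ ?k * pcompose s [:0,-1:]"
      by (subst s) (simp only: pcompose_mult pcompose_power)
    also have "\<dots> = (Polynomial.smult (-1) [:-a, 1:]) ^ ?k * pcompose s [:0,-1:]" unfolding e ..
    finally show ?thesis by (simp only: smult_power)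
  qed
  then have "[:-a, 1:] ^ ?k dvd pcompose p [:0,-1:]"
    by (metis dvd_smult dvd_triv_left mult_smult_left)
  moreover have "pcompose p [:0,-1:] \<noteq> 0"
    using pcompose_eq_0[of p "[:0,-1:]"] p by auto
  ultimately show ?thesis using order_divides by blast
qed

lemma order_neg:
  fixes p :: "complex poly"
  assumes p: "p \<noteq> 0"
  shows "order a (pcompose p [:0,-1:]) = order (-a) p"
proof -
  let ?q = "pcompose p [:0,-1:]"
  have q: "?q \<noteq> 0" using pcompose_eq_0[of p "[:0,-1:]"] p by auto
  have qq: "pcompose ?q [:0,-1:] = p"
    by (simp add: pcompose_assoc[symmetric] pcompose_pCons)
  have "order a ?q \<le> order (-a) (pcompose ?q [:0,-1:])"
    using order_neg_le[OF q, of "-a"] by simp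
  then show ?thesis using order_neg_le[OF p, of a] qq by simp
qed

lemma char_poly_uminus:
  fixes A :: "complex mat"
  assumes A: "A \<in> carrier_mat n n"
  shows "poly (char_poly (-A)) k = (-1)^n * poly (char_poly A) (-k)"
proof -
  have mA: "-A \<in> carrier_mat n n" using A by simp
  have "poly (char_poly (-A)) k = det (- (char_matrix (-A) k))" by (rule char_poly_matrix[OF mA])
  also have "- (char_matrix (-A) k) = A + k \<cdot>\<^sub>m 1\<^sub>m n"
    using A by (intro eq_matI) (auto simp: char_matrix_def)
  finally have 1: "poly (char_poly (-A)) k = det (A + k \<cdot>\<^sub>m 1\<^sub>m n)" .
  have "poly (char_poly A) (-k) = det (- (char_matrix A (-k)))" by (rule char_poly_matrix[OF A])
  also have "- (char_matrix A (-k)) = (-1) \<cdot>\<^sub>m (A + k \<cdot>\<^sub>m 1\<^sub>m n)"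
    using A by (intro eq_matI) (auto simp: char_matrix_def)
  also have "det \<dots> = (-1)^n * det (A + k \<cdot>\<^sub>m 1\<^sub>m n)" using A by simp
  finally show ?thesis using 1 by simp
qed



lemma order_sym:
  assumes m: "m \<ge> 1"
  shows "order (-z) (char_poly (map_mat complex_of_real (Ht c m)))
       = order z (char_poly (map_mat complex_of_real (Ht c m)))"
proof -
  obtain k where k: "m = Suc k" using m by (cases m) auto
  let ?A = "map_mat complex_of_real (Ht c m)"
  let ?p = "char_poly ?A"
  let ?n = "2*m"
  have A: "?A \<in> carrier_mat ?n ?n" using Ht_carrier[of c m] by simp
  have "char_poly (Ht c m) = char_poly (- Ht c m)"
    unfolding k by (rule char_poly_similar[OF Ht_similar])
  note eq = this
  have mm: "map_mat complex_of_real (- Ht c m) = - ?A"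
    using Ht_carrier[of c m] by (intro eq_matI) auto
  have mc: "- Ht c m \<in> carrier_mat ?n ?n" using Ht_carrier[of c m] by simp
  have "?p = map_poly complex_of_real (char_poly (Ht c m))"
    by (rule of_real_hom.char_poly_hom[OF Ht_carrier])
  also have "\<dots> = map_poly complex_of_real (char_poly (- Ht c m))" using eq by simp
  also have "\<dots> = char_poly (map_mat complex_of_real (- Ht c m))"
    by (rule of_real_hom.char_poly_hom[OF mc, symmetric])
  also have "map_mat complex_of_real (- Ht c m) = - ?A" by (rule mm)
  finally have pp: "?p = char_poly (- ?A)" .
  have sm: "?p = Polynomial.smult ((-1)^?n) (pcompose ?p [:0,-1:])"
  proof (rule poly_eq_poly_eq_iff[THEN iffD1], rule ext)
    fix x
    have "poly ?p x = (-1)^?n * poly ?p (-x)"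
      using char_poly_uminus[OF A, of x] pp by simp
    then show "poly ?p x = poly (Polynomial.smult ((-1)^?n) (pcompose ?p [:0,-1:])) x"
      by (simp add: poly_pcompose)
  qed
  have p0: "?p \<noteq> 0" using degree_monic_char_poly[OF A] by auto
  have n0: "((-1::complex)^?n) \<noteq> 0" by simp
  have "order z ?p = order z (pcompose ?p [:0,-1:])"
    using order_smult[OF n0, of z "pcompose ?p [:0,-1:]"] sm by simp
  also have "\<dots> = order (-z) ?p" by (rule order_neg[OF p0])
  finally show ?thesis by simp
qed

definition thetam :: "nat \<Rightarrow> real" where "thetam m = pi - pi / (2 * real m)"
definition gm :: "real \<Rightarrow> nat \<Rightarrow> real" where
  "gm c m = sqrt ((2*(cos (thetam m) + c))^2 + (2*sin (thetam m))^2)"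

lemma gm_eig:
  assumes m: "m \<ge> 1"
  shows "eigenvalue (Ht c m) (gm c m)" "eigenvalue (Ht c m) (- gm c m)" "gm c m > 0"
proof -
  define x where "x = pi / (2 * real m)"
  have x: "0 < x" "x \<le> pi/2" using m by (auto simp: x_def field_simps)
  have th: "thetam m = pi - x" by (simp add: thetam_def x_def)
  have cm: "cos (real m * thetam m) = 0"
  proof -
    have "real m * thetam m = real m * pi - pi/2" using m by (simp add: thetam_def field_simps)
    then show ?thesis by (simp add: cos_diff sin_npi)
  qed
  have sx: "sin x > 0" using x by (intro sin_gt_zero) auto
  have sn: "sin (thetam m) \<noteq> 0" using sx by (simp add: th)
  have ch: "cos (thetam m / 2) \<noteq> 0"
  proof -
    have "cos (thetam m / 2) > 0" using x pi_gt_zero by (intro cos_gt_zero_pi) (auto simp: th)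
    then show ?thesis by simp
  qed
  have pos: "(2*(cos (thetam m) + c))^2 + (2*sin (thetam m))^2 > 0"
    using sn by (simp add: add_nonneg_pos)
  have sq: "(gm c m)^2 = (2*(cos (thetam m) + c))^2 + (2*sin (thetam m))^2"
    using pos unfolding gm_def by simp
  show "eigenvalue (Ht c m) (gm c m)" by (rule eig_vec[OF m cm sn ch sq])
  show "eigenvalue (Ht c m) (- gm c m)" by (rule eig_vec[OF m cm sn ch]) (simp add: sq)
  show "gm c m > 0" using pos unfolding gm_def by simp
qed

lemma gm_lim: "(gm c \<longlongrightarrow> 2 * \<bar>c - 1\<bar>) sequentially"
proof -
  have L0: "(\<lambda>m. pi / (2 * real m)) \<longlonglongrightarrow> 0"
  proof -
    have "(\<lambda>m. (pi/2) * inverse (real m)) \<longlonglongrightarrow> (pi/2) * 0"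
      by (intro tendsto_mult tendsto_const lim_inverse_n)
    then show ?thesis by (simp add: field_simps)
  qed
  have L1: "thetam \<longlonglongrightarrow> pi - 0" unfolding thetam_def[abs_def] by (intro tendsto_diff tendsto_const L0)
  have "gm c \<longlonglongrightarrow> sqrt ((2*(cos (pi - 0) + c))^2 + (2*sin (pi - 0))^2)"
    unfolding gm_def[abs_def] by (intro tendsto_intros L1)
  moreover have "sqrt ((2*(cos (pi - 0) + c))^2 + (2*sin (pi - 0))^2) = 2 * \<bar>c - 1\<bar>"
  proof -
    have "\<bar>2 * c - 2\<bar> = 2 * \<bar>c - 1\<bar>" by (simp add: abs_if)
    then show ?thesis by (simp add: power_mult_distrib abs_mult)
  qed
  ultimately show ?thesis by simp
qed

theorem theorem5p2:
  fixes c :: real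
  assumes "c \<ge> 0"
  shows "(\<forall>m\<ge>1. \<forall>z::complex.
            order (-z) (char_poly (map_mat complex_of_real (Ht c m)))
          = order z (char_poly (map_mat complex_of_real (Ht c m))))
       \<and> (\<forall>m\<ge>1. {- 2 * \<bar>c - 1\<bar> <..< 2 * \<bar>c - 1\<bar>} \<inter> spec (Ht c m) = {})
       \<and> (\<forall>a b. a < 0 \<and> 0 < b \<and> (\<forall>m\<ge>1. {a<..<b} \<inter> spec (Ht c m) = {})
               \<longrightarrow> {a<..<b} \<subseteq> {- 2 * \<bar>c - 1\<bar> <..< 2 * \<bar>c - 1\<bar>})"
proof (intro conjI allI impI)
  fix m :: nat and z :: complex assume "m \<ge> 1"
  then show "order (-z) (char_poly (map_mat complex_of_real (Ht c m)))
          = order z (char_poly (map_mat complex_of_real (Ht c m)))" by (rule order_sym)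
next
  fix m :: nat assume m: "m \<ge> 1"
  show "{- 2 * \<bar>c - 1\<bar> <..< 2 * \<bar>c - 1\<bar>} \<inter> spec (Ht c m) = {}"
  proof (rule ccontr)
    assume "{- 2 * \<bar>c - 1\<bar> <..< 2 * \<bar>c - 1\<bar>} \<inter> spec (Ht c m) \<noteq> {}"
    then obtain l where l: "- 2 * \<bar>c - 1\<bar> < l" "l < 2 * \<bar>c - 1\<bar>" "eigenvalue (Ht c m) l"
      unfolding spec_def by auto
    have "2 * \<bar>c - 1\<bar> \<le> \<bar>l\<bar>" by (rule gap[OF assms m l(3)])
    with l(1,2) show False by linarith
  qed
next
  fix a b :: real
  assume h: "a < 0 \<and> 0 < b \<and> (\<forall>m\<ge>1. {a<..<b} \<inter> spec (Ht c m) = {})"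
  have nb: "b \<le> 2 * \<bar>c - 1\<bar>"
  proof (rule ccontr)
    assume "\<not> ?thesis"
    then have "2 * \<bar>c - 1\<bar> < b" by simp
    from order_tendstoD(2)[OF gm_lim this] obtain N where N: "\<And>m. m \<ge> N \<Longrightarrow> gm c m < b"
      unfolding eventually_sequentially by blast
    let ?m = "Suc N"
    have m1: "?m \<ge> 1" by simp
    have "gm c ?m \<in> {a<..<b}" using N[of ?m] gm_eig(3)[OF m1, of c] h by auto
    moreover have "gm c ?m \<in> spec (Ht c ?m)" using gm_eig[OF m1, of c] unfolding spec_def by auto
    moreover have "{a<..<b} \<inter> spec (Ht c ?m) = {}" using h m1 by blast
    ultimately show False by blast
  qed
  have na: "- 2 * \<bar>c - 1\<bar> \<le> a"
  proof (rule ccontr)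
    assume "\<not> ?thesis"
    then have "2 * \<bar>c - 1\<bar> < - a" by simp
    from order_tendstoD(2)[OF gm_lim this] obtain N where N: "\<And>m. m \<ge> N \<Longrightarrow> gm c m < - a"
      unfolding eventually_sequentially by blast
    let ?m = "Suc N"
    have m1: "?m \<ge> 1" by simp
    have "- gm c ?m \<in> {a<..<b}" using N[of ?m] gm_eig(3)[OF m1, of c] h by auto
    moreover have "- gm c ?m \<in> spec (Ht c ?m)" using gm_eig[OF m1, of c] unfolding spec_def by auto
    moreover have "{a<..<b} \<inter> spec (Ht c ?m) = {}" using h m1 by blast
    ultimately show False by blast
  qed
  show "{a<..<b} \<subseteq> {- 2 * \<bar>c - 1\<bar> <..< 2 * \<bar>c - 1\<bar>}"
    using na nb by auto
qed

end
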